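(* For any integers $k\ge1$ and $N\ge1$, there exist real numbers $a,b$ such that every term of the generalized $k$-FL sequence $\{S^{(a,b)}_{k,n}\}_{n\ge0}$ is an integer and $|\mathcal{Z}(\{S^{(a,b)}_{k,n}\}_{n\ge0})|\ge N$.
   Context: For real $k,a,b$, the generalized $k$-FL sequence is $S^{(a,b)}_{k,0}=2b$, $S^{(a,b)}_{k,1}=bk+a$, $S^{(a,b)}_{k,n}=kS^{(a,b)}_{k,n-1}+S^{(a,b)}_{k,n-2}$ ($n\ge2$). For an integer sequence $\mathcal{A}=\{a_n\}_{n\ge0}$, a prime $p$ is a primitive prime divisor for $a_n$ if $p\mid a_n$ but $p\nmid a_m$ for all $0\le m<n$ with $a_m\neq0$; the Zsigmondy set is $\mathcal{Z}(\mathcal{A})=\{n\ge0: a_n \text{ has no primitive prime divisor}\}$, and $|S|$ denotes cardinality. *)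

theory Defs
  imports Complex_Main "HOL-Computational_Algebra.Primes"
begin

fun kFL :: "real \<Rightarrow> real \<Rightarrow> real \<Rightarrow> nat \<Rightarrow> real" where
  "kFL k a b 0 = 2 * b"
| "kFL k a b (Suc 0) = b * k + a"
| "kFL k a b (Suc (Suc n)) = k * kFL k a b (Suc n) + kFL k a b n"

definition primitive_prime_divisor :: "(nat \<Rightarrow> int) \<Rightarrow> nat \<Rightarrow> int \<Rightarrow> bool" where
  "primitive_prime_divisor A n p \<longleftrightarrow>
     prime p \<and> p dvd A n \<and> (\<forall>m<n. A m \<noteq> 0 \<longrightarrow> \<not> p dvd A m)"

definition zsigmondy_set :: "(nat \<Rightarrow> int) \<Rightarrow> nat set" where
  "zsigmondy_set A = {n. \<not> (\<exists>p. primitive_prime_divisor A n p)}"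

end

theory Submission
  imports Defs
begin

fun UU :: "int \<Rightarrow> nat \<Rightarrow> int" where
  "UU k 0 = 0"
| "UU k (Suc 0) = 1"
| "UU k (Suc (Suc n)) = k * UU k (Suc n) + UU k n"

lemma kFL_UU: "kFL (of_int k) (of_int a) 0 n = of_int (a * UU k n)"
  by (induction k n rule: UU.induct) (simp_all add: algebra_simps)

lemma UU_pos: "k \<ge> 1 \<Longrightarrow> UU k n \<ge> 0 \<and> UU k (Suc n) \<ge> 1"
proof (induction n)
  case 0 then show ?case by simp
next
  case (Suc n)
  then have "k * UU k (Suc n) \<ge> 1 * 1" using mult_mono[of 1 k 1 "UU k (Suc n)"] by simp
  with Suc show ?case by simp
qed

theorem theorem4p7:
  fixes k N :: int
  assumes "k \<ge> 1" and "N \<ge> 1"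
  shows "\<exists>a b :: real.
           (\<forall>n. kFL (of_int k) a b n \<in> \<int>) \<and>
           (infinite (zsigmondy_set (\<lambda>n. \<lfloor>kFL (of_int k) a b n\<rfloor>)) \<or>
            N \<le> int (card (zsigmondy_set (\<lambda>n. \<lfloor>kFL (of_int k) a b n\<rfloor>))))"
proof -
  define M where "M = nat N"
  define P where "P = (\<Prod>j\<in>{1..M+1}. UU k j)"
  have Pnz: "P \<noteq> 0" unfolding P_def
  proof -
    have "UU k j \<noteq> 0" if "j \<in> {1..M+1}" for j
    proof -
      have "j \<noteq> 0" using that by auto
      then obtain i where "j = Suc i" using not0_implies_Suc by blast
      then show ?thesis using UU_pos[OF assms(1), of i] by simp
    qed
    then show "(\<Prod>j\<in>{1..M+1}. UU k j) \<noteq> 0" by simp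
  qed
  have dv: "UU k n dvd P" if "n \<in> {1..M+1}" for n
    unfolding P_def using that by (intro dvd_prodI) auto
  define A where "A = (\<lambda>n. \<lfloor>kFL (of_int k) (of_int P) 0 n\<rfloor>)"
  have A: "A n = P * UU k n" for n unfolding A_def kFL_UU by (simp only: floor_of_int)
  have sub: "{2..M+1} \<subseteq> zsigmondy_set A"
  proof
    fix n assume n: "n \<in> {2..M+1}"
    show "n \<in> zsigmondy_set A"
      unfolding zsigmondy_set_def
    proof (clarify)
      fix p assume pp: "primitive_prime_divisor A n p"
      then have pr: "prime p" and pd: "p dvd P * UU k n"
        and nd: "\<forall>m<n. A m \<noteq> 0 \<longrightarrow> \<not> p dvd A m"
        unfolding primitive_prime_divisor_def A by auto
      have "A 1 = P" using A by simp
      with nd n Pnz have "\<not> p dvd P" by force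
      moreover have "p dvd P \<or> p dvd UU k n" using pr pd prime_dvd_mult_iff by blast
      moreover have "UU k n dvd P" using dv n by auto
      ultimately show False by (meson dvd_trans)
    qed
  qed
  have "(\<forall>n. kFL (of_int k) (of_int P) 0 n \<in> \<int>)" unfolding kFL_UU by simp
  moreover have "infinite (zsigmondy_set A) \<or> N \<le> int (card (zsigmondy_set A))"
  proof (cases "finite (zsigmondy_set A)")
    case True
    then have "card {2..M+1} \<le> card (zsigmondy_set A)" using sub card_mono by blast
    then have "nat N \<le> card (zsigmondy_set A)" unfolding M_def by simp
    then have "N \<le> int (card (zsigmondy_set A))" using assms(2) by linarith
    then show ?thesis by blast
  qed simp
  ultimately show ?thesis unfolding A_def by blast
qed

end
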